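(* Every direct summand of a centrally endo-AIP module is a centrally endo-AIP module.
   Context: Modules are unitary right $R$-modules. For a module $M$ with $S=\mathrm{End}_R(M)$ and $N\le M$, $l_S(N)=\{\phi\in S:\phi(N)=0\}$. An ideal $I$ of $S$ is centrally s-unital if for every $a\in I$ there is $z\in I$ central in $S$ with $az=a$. $M$ is centrally endo-AIP if $l_S(N)$ is a centrally s-unital ideal of $S$ for every fully invariant submodule $N$ of $M$. *)

theory Defs
  imports "HOL-Algebra.Ring"
begin

text \<open>Unitary right R-modules: R is a (HOL-Algebra) ring, M an abelian group
 (additive structure of a record), and sm x r is the right scalar action x r.\<close>

definition right_module ::
  "('r,'c) ring_scheme \<Rightarrow> ('m,'b) ring_scheme \<Rightarrow> ('m \<Rightarrow> 'r \<Rightarrow> 'm) \<Rightarrow> bool" where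
  "right_module R M sm \<longleftrightarrow> ring R \<and> abelian_group M \<and>
     (\<forall>x\<in>carrier M. \<forall>r\<in>carrier R. sm x r \<in> carrier M) \<and>
     (\<forall>x\<in>carrier M. \<forall>y\<in>carrier M. \<forall>r\<in>carrier R.
        sm (x \<oplus>\<^bsub>M\<^esub> y) r = sm x r \<oplus>\<^bsub>M\<^esub> sm y r) \<and>
     (\<forall>x\<in>carrier M. \<forall>r\<in>carrier R. \<forall>s\<in>carrier R.
        sm x (r \<oplus>\<^bsub>R\<^esub> s) = sm x r \<oplus>\<^bsub>M\<^esub> sm x s) \<and>
     (\<forall>x\<in>carrier M. \<forall>r\<in>carrier R. \<forall>s\<in>carrier R.
        sm x (r \<otimes>\<^bsub>R\<^esub> s) = sm (sm x r) s) \<and>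
     (\<forall>x\<in>carrier M. sm x \<one>\<^bsub>R\<^esub> = x)"

definition submod ::
  "('r,'c) ring_scheme \<Rightarrow> ('m,'b) ring_scheme \<Rightarrow> ('m \<Rightarrow> 'r \<Rightarrow> 'm) \<Rightarrow> 'm set \<Rightarrow> bool" where
  "submod R M sm N \<longleftrightarrow> N \<subseteq> carrier M \<and> \<zero>\<^bsub>M\<^esub> \<in> N \<and>
     (\<forall>x\<in>N. \<forall>y\<in>N. x \<oplus>\<^bsub>M\<^esub> y \<in> N) \<and>
     (\<forall>x\<in>N. \<ominus>\<^bsub>M\<^esub> x \<in> N) \<and>
     (\<forall>x\<in>N. \<forall>r\<in>carrier R. sm x r \<in> N)"

text \<open>S = End_R(M): R-linear maps, taken extensional on carrier M. Multiplication
 in S is composition (maps act on the left).\<close>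

definition endo ::
  "('r,'c) ring_scheme \<Rightarrow> ('m,'b) ring_scheme \<Rightarrow> ('m \<Rightarrow> 'r \<Rightarrow> 'm) \<Rightarrow> ('m \<Rightarrow> 'm) set" where
  "endo R M sm = {f. f \<in> carrier M \<rightarrow>\<^sub>E carrier M \<and>
     (\<forall>x\<in>carrier M. \<forall>y\<in>carrier M. f (x \<oplus>\<^bsub>M\<^esub> y) = f x \<oplus>\<^bsub>M\<^esub> f y) \<and>
     (\<forall>x\<in>carrier M. \<forall>r\<in>carrier R. f (sm x r) = sm (f x) r)}"

definition emult :: "('m,'b) ring_scheme \<Rightarrow> ('m \<Rightarrow> 'm) \<Rightarrow> ('m \<Rightarrow> 'm) \<Rightarrow> ('m \<Rightarrow> 'm)" where
  "emult M f g = compose (carrier M) f g"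

definition eadd :: "('m,'b) ring_scheme \<Rightarrow> ('m \<Rightarrow> 'm) \<Rightarrow> ('m \<Rightarrow> 'm) \<Rightarrow> ('m \<Rightarrow> 'm)" where
  "eadd M f g = (\<lambda>x\<in>carrier M. f x \<oplus>\<^bsub>M\<^esub> g x)"

definition eneg :: "('m,'b) ring_scheme \<Rightarrow> ('m \<Rightarrow> 'm) \<Rightarrow> ('m \<Rightarrow> 'm)" where
  "eneg M f = (\<lambda>x\<in>carrier M. \<ominus>\<^bsub>M\<^esub> f x)"

definition ezero :: "('m,'b) ring_scheme \<Rightarrow> ('m \<Rightarrow> 'm)" where
  "ezero M = (\<lambda>x\<in>carrier M. \<zero>\<^bsub>M\<^esub>)"

definition endo_ideal ::
  "('r,'c) ring_scheme \<Rightarrow> ('m,'b) ring_scheme \<Rightarrow> ('m \<Rightarrow> 'r \<Rightarrow> 'm) \<Rightarrow> ('m \<Rightarrow> 'm) set \<Rightarrow> bool" where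
  "endo_ideal R M sm I \<longleftrightarrow> I \<subseteq> endo R M sm \<and> ezero M \<in> I \<and>
     (\<forall>a\<in>I. \<forall>b\<in>I. eadd M a b \<in> I) \<and> (\<forall>a\<in>I. eneg M a \<in> I) \<and>
     (\<forall>a\<in>I. \<forall>s\<in>endo R M sm. emult M s a \<in> I \<and> emult M a s \<in> I)"

definition endo_central ::
  "('r,'c) ring_scheme \<Rightarrow> ('m,'b) ring_scheme \<Rightarrow> ('m \<Rightarrow> 'r \<Rightarrow> 'm) \<Rightarrow> ('m \<Rightarrow> 'm) \<Rightarrow> bool" where
  "endo_central R M sm z \<longleftrightarrow> z \<in> endo R M sm \<and>
     (\<forall>s\<in>endo R M sm. emult M z s = emult M s z)"

definition centrally_s_unital_ideal ::
  "('r,'c) ring_scheme \<Rightarrow> ('m,'b) ring_scheme \<Rightarrow> ('m \<Rightarrow> 'r \<Rightarrow> 'm) \<Rightarrow> ('m \<Rightarrow> 'm) set \<Rightarrow> bool" where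
  "centrally_s_unital_ideal R M sm I \<longleftrightarrow> endo_ideal R M sm I \<and>
     (\<forall>a\<in>I. \<exists>z\<in>I. endo_central R M sm z \<and> emult M a z = a)"

definition fully_invariant ::
  "('r,'c) ring_scheme \<Rightarrow> ('m,'b) ring_scheme \<Rightarrow> ('m \<Rightarrow> 'r \<Rightarrow> 'm) \<Rightarrow> 'm set \<Rightarrow> bool" where
  "fully_invariant R M sm N \<longleftrightarrow> submod R M sm N \<and> (\<forall>f\<in>endo R M sm. f ` N \<subseteq> N)"

definition lS ::
  "('r,'c) ring_scheme \<Rightarrow> ('m,'b) ring_scheme \<Rightarrow> ('m \<Rightarrow> 'r \<Rightarrow> 'm) \<Rightarrow> 'm set \<Rightarrow> ('m \<Rightarrow> 'm) set" where
  "lS R M sm N = {f\<in>endo R M sm. \<forall>x\<in>N. f x = \<zero>\<^bsub>M\<^esub>}"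

definition centrally_endo_AIP ::
  "('r,'c) ring_scheme \<Rightarrow> ('m,'b) ring_scheme \<Rightarrow> ('m \<Rightarrow> 'r \<Rightarrow> 'm) \<Rightarrow> bool" where
  "centrally_endo_AIP R M sm \<longleftrightarrow> right_module R M sm \<and>
     (\<forall>N. fully_invariant R M sm N \<longrightarrow> centrally_s_unital_ideal R M sm (lS R M sm N))"

definition direct_summand ::
  "('r,'c) ring_scheme \<Rightarrow> ('m,'b) ring_scheme \<Rightarrow> ('m \<Rightarrow> 'r \<Rightarrow> 'm) \<Rightarrow> 'm set \<Rightarrow> bool" where
  "direct_summand R M sm N \<longleftrightarrow> submod R M sm N \<and>
     (\<exists>K. submod R M sm K \<and> N \<inter> K = {\<zero>\<^bsub>M\<^esub>} \<and>
          (\<forall>x\<in>carrier M. \<exists>a\<in>N. \<exists>b\<in>K. x = a \<oplus>\<^bsub>M\<^esub> b))"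

end

theory Submission
  imports Defs
begin

lemma rmD:
  assumes "right_module R G sm"
  shows "ring R" "abelian_group G"
    "\<And>x r. x\<in>carrier G \<Longrightarrow> r\<in>carrier R \<Longrightarrow> sm x r \<in> carrier G"
    "\<And>x y r. x\<in>carrier G \<Longrightarrow> y\<in>carrier G \<Longrightarrow> r\<in>carrier R \<Longrightarrow>
        sm (x \<oplus>\<^bsub>G\<^esub> y) r = sm x r \<oplus>\<^bsub>G\<^esub> sm y r"
  using assms unfolding right_module_def by auto

lemma sm_zero:
  assumes "right_module R G sm" "r \<in> carrier R"
  shows "sm \<zero>\<^bsub>G\<^esub> r = \<zero>\<^bsub>G\<^esub>"
proof -
  interpret abelian_group G by (rule rmD(2)[OF assms(1)])
  have c: "sm \<zero>\<^bsub>G\<^esub> r \<in> carrier G" using rmD(3)[OF assms(1)] assms(2) by simp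
  have "sm \<zero>\<^bsub>G\<^esub> r = sm (\<zero>\<^bsub>G\<^esub> \<oplus>\<^bsub>G\<^esub> \<zero>\<^bsub>G\<^esub>) r" by simp
  also have "\<dots> = sm \<zero>\<^bsub>G\<^esub> r \<oplus>\<^bsub>G\<^esub> sm \<zero>\<^bsub>G\<^esub> r"
    by (rule rmD(4)[OF assms(1)]) (simp_all add: assms)
  finally show ?thesis using c by simp
qed

lemma sm_neg:
  assumes "right_module R G sm" "r \<in> carrier R" "x \<in> carrier G"
  shows "sm (\<ominus>\<^bsub>G\<^esub> x) r = \<ominus>\<^bsub>G\<^esub> sm x r"
proof -
  interpret abelian_group G by (rule rmD(2)[OF assms(1)])
  have "sm (\<ominus>\<^bsub>G\<^esub> x) r \<oplus>\<^bsub>G\<^esub> sm x r = sm (\<ominus>\<^bsub>G\<^esub> x \<oplus>\<^bsub>G\<^esub> x) r"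
    using rmD(4)[OF assms(1)] assms by simp
  also have "\<dots> = \<zero>\<^bsub>G\<^esub>" using assms sm_zero by (simp add: l_neg)
  finally show ?thesis using assms rmD(3)[OF assms(1)]
    by (intro minus_equality[symmetric]) auto
qed

lemma endoD:
  assumes "f \<in> endo R G sm"
  shows "\<And>x. x \<in> carrier G \<Longrightarrow> f x \<in> carrier G"
    "\<And>x. x \<notin> carrier G \<Longrightarrow> f x = undefined"
    "\<And>x y. x\<in>carrier G \<Longrightarrow> y\<in>carrier G \<Longrightarrow> f (x \<oplus>\<^bsub>G\<^esub> y) = f x \<oplus>\<^bsub>G\<^esub> f y"
    "\<And>x r. x\<in>carrier G \<Longrightarrow> r\<in>carrier R \<Longrightarrow> f (sm x r) = sm (f x) r"
  using assms unfolding endo_def by (auto simp: PiE_def Pi_def extensional_def)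

lemma endo_zero:
  assumes "abelian_group G" "f \<in> endo R G sm"
  shows "f \<zero>\<^bsub>G\<^esub> = \<zero>\<^bsub>G\<^esub>"
proof -
  interpret abelian_group G by fact
  have c: "f \<zero>\<^bsub>G\<^esub> \<in> carrier G" using endoD(1)[OF assms(2)] by simp
  have "f \<zero>\<^bsub>G\<^esub> = f (\<zero>\<^bsub>G\<^esub> \<oplus>\<^bsub>G\<^esub> \<zero>\<^bsub>G\<^esub>)" by simp
  also have "\<dots> = f \<zero>\<^bsub>G\<^esub> \<oplus>\<^bsub>G\<^esub> f \<zero>\<^bsub>G\<^esub>" by (rule endoD(3)[OF assms(2)]) simp_all
  finally show ?thesis using c by simp
qed

lemma endo_neg:
  assumes "abelian_group G" "f \<in> endo R G sm" "x \<in> carrier G"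
  shows "f (\<ominus>\<^bsub>G\<^esub> x) = \<ominus>\<^bsub>G\<^esub> f x"
proof -
  interpret abelian_group G by fact
  have "f (\<ominus>\<^bsub>G\<^esub> x) \<oplus>\<^bsub>G\<^esub> f x = f (\<ominus>\<^bsub>G\<^esub> x \<oplus>\<^bsub>G\<^esub> x)"
    using endoD(3)[OF assms(2)] assms by simp
  also have "\<dots> = \<zero>\<^bsub>G\<^esub>" using assms endo_zero by (simp add: l_neg)
  finally show ?thesis using assms endoD(1)[OF assms(2)]
    by (intro minus_equality[symmetric]) auto
qed

lemma endo_emult:
  assumes "right_module R G sm" "f \<in> endo R G sm" "g \<in> endo R G sm"
  shows "emult G f g \<in> endo R G sm"
proof -
  interpret abelian_group G using rmD(2)[OF assms(1)] .
  show ?thesis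
  using assms rmD(3)[OF assms(1)] endoD[OF assms(2)] endoD[OF assms(3)]
  unfolding endo_def emult_def compose_def
  by (auto simp: PiE_def Pi_def extensional_def)
qed

lemma endo_id:
  assumes "right_module R G sm"
  shows "(\<lambda>x\<in>carrier G. x) \<in> endo R G sm"
proof -
  interpret abelian_group G using rmD(2)[OF assms(1)] .
  show ?thesis
  using assms rmD(3)[OF assms(1)]
  unfolding endo_def by auto
qed

lemma ainv_sub:
  assumes "abelian_group M" "N \<subseteq> carrier M" "x \<in> N" "\<ominus>\<^bsub>M\<^esub> x \<in> N"
  shows "\<ominus>\<^bsub>M\<lparr>carrier := N\<rparr>\<^esub> x = \<ominus>\<^bsub>M\<^esub> x"
proof -
  interpret abelian_group M by fact
  have xM: "x \<in> carrier M" using assms by auto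
  have "m_inv (add_monoid (M\<lparr>carrier := N\<rparr>)) x = \<ominus>\<^bsub>M\<^esub> x"
    unfolding m_inv_def
    apply (rule the_equality)
    using assms xM apply (simp add: l_neg r_neg)
    using assms xM by (auto intro: minus_equality[symmetric])
  then show ?thesis by (simp add: a_inv_def)
qed

lemma rm_sub:
  assumes "right_module R M sm" "submod R M sm N"
  shows "right_module R (M\<lparr>carrier := N\<rparr>) sm"
proof -
  interpret abelian_group M using rmD(2)[OF assms(1)] .
  have NM: "N \<subseteq> carrier M" using assms(2) unfolding submod_def by auto
  have inv: "\<And>x. x \<in> N \<Longrightarrow> \<exists>y\<in>N. y \<oplus>\<^bsub>M\<^esub> x = \<zero>\<^bsub>M\<^esub>"
  proof -
    fix x assume x: "x \<in> N"
    then have "\<ominus>\<^bsub>M\<^esub> x \<in> N" using assms(2) unfolding submod_def by auto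
    moreover have "\<ominus>\<^bsub>M\<^esub> x \<oplus>\<^bsub>M\<^esub> x = \<zero>\<^bsub>M\<^esub>" using x NM by (simp add: l_neg subsetD)
    ultimately show "\<exists>y\<in>N. y \<oplus>\<^bsub>M\<^esub> x = \<zero>\<^bsub>M\<^esub>" by blast
  qed
  have ag: "abelian_group (M\<lparr>carrier := N\<rparr>)"
    apply (rule abelian_groupI)
    using assms(2) NM inv unfolding submod_def
    by (auto simp: subsetD[OF NM] a_ac)
  show ?thesis using assms(1) ag assms(2) NM unfolding right_module_def submod_def
    by (auto simp: subsetD)
qed


locale dsum =
  fixes R :: "('r,'c) ring_scheme" and M :: "('m,'b) ring_scheme"
    and sm :: "'m \<Rightarrow> 'r \<Rightarrow> 'm" and N K :: "'m set"
  assumes rm: "right_module R M sm" and sN: "submod R M sm N" and sK: "submod R M sm K"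
    and NK: "N \<inter> K = {\<zero>\<^bsub>M\<^esub>}"
    and span: "\<forall>x\<in>carrier M. \<exists>a\<in>N. \<exists>b\<in>K. x = a \<oplus>\<^bsub>M\<^esub> b"
begin

sublocale abelian_group M using rmD(2)[OF rm] .

lemma NM: "N \<subseteq> carrier M" using sN unfolding submod_def by auto
lemma KM: "K \<subseteq> carrier M" using sK unfolding submod_def by auto
lemma Ncl: "\<zero>\<^bsub>M\<^esub> \<in> N" "\<And>x y. x \<in> N \<Longrightarrow> y \<in> N \<Longrightarrow> x \<oplus>\<^bsub>M\<^esub> y \<in> N"
   "\<And>x. x \<in> N \<Longrightarrow> \<ominus>\<^bsub>M\<^esub> x \<in> N" "\<And>x r. x \<in> N \<Longrightarrow> r \<in> carrier R \<Longrightarrow> sm x r \<in> N"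
  using sN unfolding submod_def by auto
lemma Kcl: "\<zero>\<^bsub>M\<^esub> \<in> K" "\<And>x y. x \<in> K \<Longrightarrow> y \<in> K \<Longrightarrow> x \<oplus>\<^bsub>M\<^esub> y \<in> K"
   "\<And>x. x \<in> K \<Longrightarrow> \<ominus>\<^bsub>M\<^esub> x \<in> K" "\<And>x r. x \<in> K \<Longrightarrow> r \<in> carrier R \<Longrightarrow> sm x r \<in> K"
  using sK unfolding submod_def by auto

lemma NMx: "x \<in> N \<Longrightarrow> x \<in> carrier M" using NM by auto
lemma KMx: "x \<in> K \<Longrightarrow> x \<in> carrier M" using KM by auto

lemma decomp_unique:
  assumes a: "a \<in> N" and b: "b \<in> K" and c: "c \<in> N" and d: "d \<in> K"
    and eq: "a \<oplus>\<^bsub>M\<^esub> b = c \<oplus>\<^bsub>M\<^esub> d"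
  shows "a = c"
proof -
  have cM: "a \<in> carrier M" "b \<in> carrier M" "c \<in> carrier M" "d \<in> carrier M"
    using a b c d NMx KMx by auto
  define t where "t = a \<oplus>\<^bsub>M\<^esub> \<ominus>\<^bsub>M\<^esub> c"
  have tN: "t \<in> N" unfolding t_def using a c Ncl by auto
  have tM: "t \<in> carrier M" using tN NMx by auto
  have ta: "t \<oplus>\<^bsub>M\<^esub> c = a" unfolding t_def using cM by (simp add: a_assoc l_neg)
  have "c \<oplus>\<^bsub>M\<^esub> (t \<oplus>\<^bsub>M\<^esub> b) = c \<oplus>\<^bsub>M\<^esub> d"
    using eq ta cM tM by (simp add: a_ac)
  then have "t \<oplus>\<^bsub>M\<^esub> b = d" using cM tM by simp
  moreover have "(t \<oplus>\<^bsub>M\<^esub> b) \<oplus>\<^bsub>M\<^esub> \<ominus>\<^bsub>M\<^esub> b = t" using cM tM by (simp add: a_assoc r_neg)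
  ultimately have "t = d \<oplus>\<^bsub>M\<^esub> \<ominus>\<^bsub>M\<^esub> b" by simp
  then have "t \<in> K" using b d Kcl by auto
  then have "t = \<zero>\<^bsub>M\<^esub>" using tN NK by auto
  then show ?thesis using ta cM by simp
qed

definition e where "e = (\<lambda>x\<in>carrier M. THE a. a \<in> N \<and> (\<exists>b\<in>K. x = a \<oplus>\<^bsub>M\<^esub> b))"

lemma e_eq: assumes "a \<in> N" "b \<in> K" shows "e (a \<oplus>\<^bsub>M\<^esub> b) = a"
proof -
  have "a \<oplus>\<^bsub>M\<^esub> b \<in> carrier M" using assms NMx KMx by auto
  then have "e (a \<oplus>\<^bsub>M\<^esub> b) = (THE a'. a' \<in> N \<and> (\<exists>b'\<in>K. a \<oplus>\<^bsub>M\<^esub> b = a' \<oplus>\<^bsub>M\<^esub> b'))"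
    unfolding e_def by simp
  also have "\<dots> = a"
    apply (rule the_equality)
    using assms apply blast
    apply (elim conjE bexE)
    apply (rule sym, rule decomp_unique[OF assms(1) assms(2)])
      apply assumption+
    done
  finally show ?thesis .
qed

lemma e_dec: assumes "x \<in> carrier M" obtains b where "e x \<in> N" "b \<in> K" "x = e x \<oplus>\<^bsub>M\<^esub> b"
proof -
  obtain a b where "a \<in> N" "b \<in> K" "x = a \<oplus>\<^bsub>M\<^esub> b" using span assms by blast
  then show ?thesis using that e_eq by auto
qed

lemma eN: assumes "x \<in> carrier M" shows "e x \<in> N" by (rule e_dec[OF assms])
lemma eM: "x \<in> carrier M \<Longrightarrow> e x \<in> carrier M" using eN NMx by auto
lemma e_id: "x \<in> N \<Longrightarrow> e x = x"
  using e_eq[of x "\<zero>\<^bsub>M\<^esub>"] Kcl NMx by simp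

lemma e_add: assumes "x \<in> carrier M" "y \<in> carrier M"
  shows "e (x \<oplus>\<^bsub>M\<^esub> y) = e x \<oplus>\<^bsub>M\<^esub> e y"
proof -
  obtain b where b: "e x \<in> N" "b \<in> K" "x = e x \<oplus>\<^bsub>M\<^esub> b" using e_dec assms(1) by blast
  obtain d where d: "e y \<in> N" "d \<in> K" "y = e y \<oplus>\<^bsub>M\<^esub> d" using e_dec assms(2) by blast
  have *: "(e x \<oplus>\<^bsub>M\<^esub> b) \<oplus>\<^bsub>M\<^esub> (e y \<oplus>\<^bsub>M\<^esub> d) = (e x \<oplus>\<^bsub>M\<^esub> e y) \<oplus>\<^bsub>M\<^esub> (b \<oplus>\<^bsub>M\<^esub> d)"
    using b(1,2) d(1,2) NMx KMx by (simp add: a_ac)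
  from b(3) d(3) have "x \<oplus>\<^bsub>M\<^esub> y = (e x \<oplus>\<^bsub>M\<^esub> b) \<oplus>\<^bsub>M\<^esub> (e y \<oplus>\<^bsub>M\<^esub> d)" by (rule arg_cong2)
  with * have "x \<oplus>\<^bsub>M\<^esub> y = (e x \<oplus>\<^bsub>M\<^esub> e y) \<oplus>\<^bsub>M\<^esub> (b \<oplus>\<^bsub>M\<^esub> d)" by simp
  then show ?thesis using e_eq b d Ncl Kcl by simp
qed

lemma e_sm: assumes "x \<in> carrier M" "r \<in> carrier R"
  shows "e (sm x r) = sm (e x) r"
proof -
  obtain b where b: "e x \<in> N" "b \<in> K" "x = e x \<oplus>\<^bsub>M\<^esub> b" using e_dec assms(1) by blast
  from b(3) have "sm x r = sm (e x \<oplus>\<^bsub>M\<^esub> b) r" by (rule arg_cong[where f="\<lambda>x. sm x r"])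
  also have "\<dots> = sm (e x) r \<oplus>\<^bsub>M\<^esub> sm b r"
    by (rule rmD(4)[OF rm]) (use b NMx KMx assms in auto)
  finally have "sm x r = sm (e x) r \<oplus>\<^bsub>M\<^esub> sm b r" .
  then show ?thesis using e_eq b Ncl Kcl assms by simp
qed

lemma e_endo: "e \<in> endo R M sm"
proof -
  have "e \<in> extensional (carrier M)" unfolding e_def by simp
  then have "e \<in> carrier M \<rightarrow>\<^sub>E carrier M" using eM by (simp add: PiE_iff)
  then show ?thesis unfolding endo_def using e_add e_sm by blast
qed


abbreviation "MN \<equiv> M\<lparr>carrier := N\<rparr>"

lemma endoN_iff: "f \<in> endo R MN sm \<longleftrightarrow> f \<in> N \<rightarrow>\<^sub>E N \<and>
   (\<forall>x\<in>N. \<forall>y\<in>N. f (x \<oplus>\<^bsub>M\<^esub> y) = f x \<oplus>\<^bsub>M\<^esub> f y) \<and>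
   (\<forall>x\<in>N. \<forall>r\<in>carrier R. f (sm x r) = sm (f x) r)"
  unfolding endo_def by simp

lemma ext_endo: assumes "a \<in> endo R MN sm" shows "(\<lambda>x\<in>carrier M. a (e x)) \<in> endo R M sm"
  using assms eN e_add e_sm rmD(3)[OF rm] NMx a_closed
  unfolding endoN_iff endo_def by (auto simp: PiE_def Pi_def)

lemma restr_endo: assumes "z \<in> endo R M sm" "\<And>x. x \<in> N \<Longrightarrow> z x \<in> N"
  shows "restrict z N \<in> endo R MN sm"
  using assms endoD[OF assms(1)] NMx Ncl unfolding endoN_iff by auto

lemma ef_endo: assumes "f \<in> endo R M sm" shows "restrict (\<lambda>x. e (f x)) N \<in> endo R MN sm"
  using assms endoD[OF assms(1)] NMx Ncl eN e_add e_sm unfolding endoN_iff by auto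

end

locale dsumX = dsum +
  fixes X assumes fi: "fully_invariant R (M\<lparr>carrier := N\<rparr>) sm X"
begin

lemma rmN: "right_module R MN sm" by (rule rm_sub[OF rm sN])
lemma agN: "abelian_group MN" by (rule rmD(2)[OF rmN])
lemma ainvN: "x \<in> N \<Longrightarrow> \<ominus>\<^bsub>MN\<^esub> x = \<ominus>\<^bsub>M\<^esub> x"
  using ainv_sub[OF rmD(2)[OF rm] NM] Ncl by blast

lemma XN: "X \<subseteq> N" using fi unfolding fully_invariant_def submod_def by simp
lemma XNx: "x \<in> X \<Longrightarrow> x \<in> N" using XN by auto
lemma Xcl: "\<zero>\<^bsub>M\<^esub> \<in> X" "\<And>x y. x \<in> X \<Longrightarrow> y \<in> X \<Longrightarrow> x \<oplus>\<^bsub>M\<^esub> y \<in> X"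
   "\<And>x r. x \<in> X \<Longrightarrow> r \<in> carrier R \<Longrightarrow> sm x r \<in> X"
  using fi unfolding fully_invariant_def submod_def by auto
lemma Xneg: "x \<in> X \<Longrightarrow> \<ominus>\<^bsub>M\<^esub> x \<in> X"
  using fi ainvN XNx unfolding fully_invariant_def submod_def by force
lemma invX: "f \<in> endo R MN sm \<Longrightarrow> x \<in> X \<Longrightarrow> f x \<in> X"
  using fi unfolding fully_invariant_def by auto

lemma Lchar: "f \<in> lS R MN sm X \<longleftrightarrow> f \<in> endo R MN sm \<and> (\<forall>x\<in>X. f x = \<zero>\<^bsub>M\<^esub>)"
  by (simp add: lS_def)

lemma ideal: "endo_ideal R MN sm (lS R MN sm X)"
  unfolding endo_ideal_def
proof (intro conjI ballI)
  show "lS R MN sm X \<subseteq> endo R MN sm" using Lchar by auto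
  show "ezero MN \<in> lS R MN sm X"
    unfolding Lchar endoN_iff ezero_def using Ncl sm_zero[OF rm] XNx by auto
next
  fix a b assume a: "a \<in> lS R MN sm X" and b: "b \<in> lS R MN sm X"
  then have a': "a \<in> N \<rightarrow>\<^sub>E N" "\<forall>x\<in>N. \<forall>y\<in>N. a (x \<oplus>\<^bsub>M\<^esub> y) = a x \<oplus>\<^bsub>M\<^esub> a y"
   "\<forall>x\<in>N. \<forall>r\<in>carrier R. a (sm x r) = sm (a x) r" "\<forall>x\<in>X. a x = \<zero>\<^bsub>M\<^esub>"
   and b': "b \<in> N \<rightarrow>\<^sub>E N" "\<forall>x\<in>N. \<forall>y\<in>N. b (x \<oplus>\<^bsub>M\<^esub> y) = b x \<oplus>\<^bsub>M\<^esub> b y"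
   "\<forall>x\<in>N. \<forall>r\<in>carrier R. b (sm x r) = sm (b x) r" "\<forall>x\<in>X. b x = \<zero>\<^bsub>M\<^esub>"
    unfolding Lchar endoN_iff by auto
  have aN: "\<And>x. x \<in> N \<Longrightarrow> a x \<in> carrier M" "\<And>x. x \<in> N \<Longrightarrow> a x \<in> N"
    and bN: "\<And>x. x \<in> N \<Longrightarrow> b x \<in> carrier M" "\<And>x. x \<in> N \<Longrightarrow> b x \<in> N"
    using a'(1) b'(1) NMx by auto
  show "eadd MN a b \<in> lS R MN sm X"
    unfolding Lchar endoN_iff eadd_def
  proof (intro conjI ballI)
    show "(\<lambda>x\<in>carrier MN. a x \<oplus>\<^bsub>MN\<^esub> b x) \<in> N \<rightarrow>\<^sub>E N" using aN bN Ncl by auto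
  next
    fix x y assume "x \<in> N" "y \<in> N"
    then show "(\<lambda>x\<in>carrier MN. a x \<oplus>\<^bsub>MN\<^esub> b x) (x \<oplus>\<^bsub>M\<^esub> y) =
      (\<lambda>x\<in>carrier MN. a x \<oplus>\<^bsub>MN\<^esub> b x) x \<oplus>\<^bsub>M\<^esub> (\<lambda>x\<in>carrier MN. a x \<oplus>\<^bsub>MN\<^esub> b x) y"
      using a'(2) b'(2) aN bN Ncl by (simp add: a_ac)
  next
    fix x r assume "x \<in> N" "r \<in> carrier R"
    then show "(\<lambda>x\<in>carrier MN. a x \<oplus>\<^bsub>MN\<^esub> b x) (sm x r) = sm ((\<lambda>x\<in>carrier MN. a x \<oplus>\<^bsub>MN\<^esub> b x) x) r"
      using a'(3) b'(3) aN bN Ncl rmD(4)[OF rm] by simp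
  next
    fix x assume "x \<in> X"
    then show "(\<lambda>x\<in>carrier MN. a x \<oplus>\<^bsub>MN\<^esub> b x) x = \<zero>\<^bsub>M\<^esub>" using a'(4) b'(4) XNx by simp
  qed
  show "eneg MN a \<in> lS R MN sm X"
    unfolding Lchar endoN_iff eneg_def
  proof (intro conjI ballI)
    show "(\<lambda>x\<in>carrier MN. \<ominus>\<^bsub>MN\<^esub> a x) \<in> N \<rightarrow>\<^sub>E N" using aN Ncl ainvN by auto
  next
    fix x y assume "x \<in> N" "y \<in> N"
    then show "(\<lambda>x\<in>carrier MN. \<ominus>\<^bsub>MN\<^esub> a x) (x \<oplus>\<^bsub>M\<^esub> y) =
      (\<lambda>x\<in>carrier MN. \<ominus>\<^bsub>MN\<^esub> a x) x \<oplus>\<^bsub>M\<^esub> (\<lambda>x\<in>carrier MN. \<ominus>\<^bsub>MN\<^esub> a x) y"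
      using a'(2) aN Ncl ainvN by (simp add: minus_add)
  next
    fix x r assume "x \<in> N" "r \<in> carrier R"
    then show "(\<lambda>x\<in>carrier MN. \<ominus>\<^bsub>MN\<^esub> a x) (sm x r) = sm ((\<lambda>x\<in>carrier MN. \<ominus>\<^bsub>MN\<^esub> a x) x) r"
      using a'(3) aN Ncl ainvN sm_neg[OF rm] by simp
  next
    fix x assume "x \<in> X"
    then show "(\<lambda>x\<in>carrier MN. \<ominus>\<^bsub>MN\<^esub> a x) x = \<zero>\<^bsub>M\<^esub>" using a'(4) XNx ainvN Ncl by simp
  qed
next
  fix a s assume a: "a \<in> lS R MN sm X" and s: "s \<in> endo R MN sm"
  have aE: "a \<in> endo R MN sm" and a0: "\<forall>x\<in>X. a x = \<zero>\<^bsub>M\<^esub>" using a Lchar by auto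
  show "emult MN s a \<in> lS R MN sm X"
    unfolding Lchar using endo_emult[OF rmN s aE] a0 endo_zero[OF agN s] XNx
    by (simp add: emult_def compose_def)
  show "emult MN a s \<in> lS R MN sm X"
    unfolding Lchar using endo_emult[OF rmN aE s] a0 invX[OF s] XNx
    by (simp add: emult_def compose_def)
qed


lemma unital:
  assumes aip: "centrally_endo_AIP R M sm" and aL: "a \<in> lS R MN sm X"
  shows "\<exists>z\<in>lS R MN sm X. endo_central R MN sm z \<and> emult MN a z = a"
proof -
  have aE: "a \<in> endo R MN sm" and a0: "\<And>x. x\<in>X \<Longrightarrow> a x = \<zero>\<^bsub>M\<^esub>" using aL Lchar by auto
  define Y where "Y = {y \<in> carrier M. \<forall>f\<in>endo R M sm. e (f y) \<in> X}"
  have XY: "X \<subseteq> Y"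
  proof
    fix x assume x: "x \<in> X"
    have "e (f x) \<in> X" if f: "f \<in> endo R M sm" for f
      using invX[OF ef_endo[OF f] x] XNx[OF x] by simp
    then show "x \<in> Y" unfolding Y_def using x XNx NMx by auto
  qed
  have ag: "abelian_group M" by (rule rmD(2)[OF rm])
  have fiY: "fully_invariant R M sm Y"
    unfolding fully_invariant_def submod_def
  proof (intro conjI ballI subsetI)
    show "x \<in> carrier M" if "x \<in> Y" for x using that Y_def by auto
    show "\<zero>\<^bsub>M\<^esub> \<in> Y" unfolding Y_def
    proof (intro CollectI conjI ballI)
      show "\<zero>\<^bsub>M\<^esub> \<in> carrier M" by simp
      fix f assume f: "f \<in> endo R M sm"
      show "e (f \<zero>\<^bsub>M\<^esub>) \<in> X" using endo_zero[OF ag f] e_id[OF Ncl(1)] Xcl(1) by simp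
    qed
  next
    fix x y assume x: "x \<in> Y" and y: "y \<in> Y"
    show "x \<oplus>\<^bsub>M\<^esub> y \<in> Y" unfolding Y_def
    proof (intro CollectI conjI ballI)
      show "x \<oplus>\<^bsub>M\<^esub> y \<in> carrier M" using x y Y_def by auto
      fix f assume f: "f \<in> endo R M sm"
      have "e (f (x \<oplus>\<^bsub>M\<^esub> y)) = e (f x) \<oplus>\<^bsub>M\<^esub> e (f y)"
        using x y Y_def endoD[OF f] e_add by auto
      then show "e (f (x \<oplus>\<^bsub>M\<^esub> y)) \<in> X" using x y f Y_def Xcl by auto
    qed
  next
    fix x assume x: "x \<in> Y"
    show "\<ominus>\<^bsub>M\<^esub> x \<in> Y" unfolding Y_def
    proof (intro CollectI conjI ballI)
      show "\<ominus>\<^bsub>M\<^esub> x \<in> carrier M" using x Y_def by auto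
      fix f assume f: "f \<in> endo R M sm"
      have "e (f (\<ominus>\<^bsub>M\<^esub> x)) = \<ominus>\<^bsub>M\<^esub> e (f x)"
        using x Y_def endoD[OF f] endo_neg[OF ag f] endo_neg[OF ag e_endo] by auto
      then show "e (f (\<ominus>\<^bsub>M\<^esub> x)) \<in> X" using x f Y_def Xneg by auto
    qed
  next
    fix x r assume x: "x \<in> Y" and r: "r \<in> carrier R"
    show "sm x r \<in> Y" unfolding Y_def
    proof (intro CollectI conjI ballI)
      show "sm x r \<in> carrier M" using x r Y_def rmD(3)[OF rm] by auto
      fix f assume f: "f \<in> endo R M sm"
      have "e (f (sm x r)) = sm (e (f x)) r"
        using x r Y_def endoD[OF f] e_sm by auto
      then show "e (f (sm x r)) \<in> X" using x f r Y_def Xcl by auto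
    qed
  next
    fix g w assume g: "g \<in> endo R M sm" and "w \<in> g ` Y"
    show "w \<in> Y"
    proof -
      from \<open>w \<in> g ` Y\<close> obtain y where y: "y \<in> Y" "w = g y" by auto
      have "e (f (g y)) \<in> X" if f: "f \<in> endo R M sm" for f
      proof -
        have "emult M f g \<in> endo R M sm" by (rule endo_emult[OF rm f g])
        then have "e (emult M f g y) \<in> X" using y Y_def by auto
        then show ?thesis using y Y_def by (simp add: emult_def compose_def)
      qed
      then show "w \<in> Y" using y Y_def endoD[OF g] by auto
    qed
  qed
  have IY: "centrally_s_unital_ideal R M sm (lS R M sm Y)"
    using aip fiY unfolding centrally_endo_AIP_def by blast
  define abar where "abar = (\<lambda>x\<in>carrier M. a (e x))"
  have abarE: "abar \<in> endo R M sm" unfolding abar_def by (rule ext_endo[OF aE])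
  have abarL: "abar \<in> lS R M sm Y"
  proof -
    have "abar y = \<zero>\<^bsub>M\<^esub>" if y: "y \<in> Y" for y
    proof -
      have "e ((\<lambda>x\<in>carrier M. x) y) \<in> X" using y endo_id[OF rm] Y_def by blast
      then have "e y \<in> X" using y Y_def by simp
      then show ?thesis using a0 y Y_def abar_def by simp
    qed
    then show ?thesis using abarE by (simp add: lS_def)
  qed
  obtain z where zL: "z \<in> lS R M sm Y" and zc: "endo_central R M sm z"
    and az: "emult M abar z = abar"
    using IY abarL unfolding centrally_s_unital_ideal_def by blast
  have zE: "z \<in> endo R M sm" using zL by (simp add: lS_def)
  have zY: "\<And>y. y \<in> Y \<Longrightarrow> z y = \<zero>\<^bsub>M\<^esub>" using zL by (simp add: lS_def)
  have zcomm: "\<And>s. s \<in> endo R M sm \<Longrightarrow> emult M z s = emult M s z"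
    using zc unfolding endo_central_def by blast
  have ze: "z (e x) = e (z x)" if x: "x \<in> carrier M" for x
    using fun_cong[OF zcomm[OF e_endo], of x] x by (simp add: emult_def compose_def)
  have zN: "z x \<in> N" if x: "x \<in> N" for x
    using ze[OF NMx[OF x]] e_id[OF x] eN endoD(1)[OF zE] NMx[OF x] by metis
  define z' where "z' = restrict z N"
  have z'E: "z' \<in> endo R MN sm" unfolding z'_def by (rule restr_endo[OF zE zN])
  have z'L: "z' \<in> lS R MN sm X"
    unfolding Lchar using z'E XY zY XNx z'_def by auto
  have cent: "endo_central R MN sm z'"
    unfolding endo_central_def
  proof (intro conjI ballI)
    show "z' \<in> endo R MN sm" by (rule z'E)
    fix g assume g: "g \<in> endo R MN sm"
    have gN: "\<And>x. x \<in> N \<Longrightarrow> g x \<in> N" using g unfolding endoN_iff by auto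
    have gbE: "(\<lambda>x\<in>carrier M. g (e x)) \<in> endo R M sm" by (rule ext_endo[OF g])
    have zg: "z (g x) = g (z x)" if x: "x \<in> N" for x
    proof -
      have "emult M z (\<lambda>x\<in>carrier M. g (e x)) x = emult M (\<lambda>x\<in>carrier M. g (e x)) z x"
        using zcomm[OF gbE] by simp
      then show ?thesis using x NMx zN e_id endoD(1)[OF zE]
        by (simp add: emult_def compose_def)
    qed
    show "emult MN z' g = emult MN g z'"
    proof
      fix x show "emult MN z' g x = emult MN g z' x"
        using zg gN z'_def by (simp add: emult_def compose_def)
    qed
  qed
  have aund: "\<And>x. x \<notin> N \<Longrightarrow> a x = undefined" using endoD(2)[OF aE] by simp
  have az': "emult MN a z' = a"
  proof
    fix x show "emult MN a z' x = a x"
    proof (cases "x \<in> N")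
      case True
      have "emult M abar z x = abar x" using az by simp
      then have "a (e (z x)) = a (e x)"
        using True NMx endoD(1)[OF zE] by (simp add: emult_def compose_def abar_def)
      then show ?thesis using True zN e_id z'_def by (simp add: emult_def compose_def)
    next
      case False
      then show ?thesis using aund by (simp add: emult_def compose_def)
    qed
  qed
  show ?thesis using z'L cent az' by blast
qed

end

theorem proposition2p6:
  fixes R :: "('r,'c) ring_scheme" and M :: "('m,'b) ring_scheme"
    and sm :: "'m \<Rightarrow> 'r \<Rightarrow> 'm" and N :: "'m set"
  assumes "right_module R M sm"
    and "centrally_endo_AIP R M sm"
    and "direct_summand R M sm N"
  shows "centrally_endo_AIP R (M\<lparr>carrier := N\<rparr>) sm"
proof -
  obtain K where sN: "submod R M sm N" and K: "submod R M sm K" "N \<inter> K = {\<zero>\<^bsub>M\<^esub>}"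
    "\<forall>x\<in>carrier M. \<exists>a\<in>N. \<exists>b\<in>K. x = a \<oplus>\<^bsub>M\<^esub> b"
    using assms(3) unfolding direct_summand_def by blast
  interpret dsum R M sm N K using assms(1) sN K by unfold_locales
  have rmN: "right_module R (M\<lparr>carrier := N\<rparr>) sm" by (rule rm_sub[OF assms(1) sN])
  have "centrally_s_unital_ideal R (M\<lparr>carrier := N\<rparr>) sm (lS R (M\<lparr>carrier := N\<rparr>) sm X)"
    if fi: "fully_invariant R (M\<lparr>carrier := N\<rparr>) sm X" for X
  proof -
    interpret dsumX R M sm N K X using fi by unfold_locales
    show ?thesis unfolding centrally_s_unital_ideal_def
      using ideal unital[OF assms(2)] by blast
  qed
  then show ?thesis using rmN unfolding centrally_endo_AIP_def by blast
qed

end
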